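(* Let $k=1$ and let $Y$ be uniformly distributed on $\mathcal{Y}=\{y_1,\dots,y_m\}$ with $y_1\ge y_2\ge\dots\ge y_m$ distinct. Consider the "reversal" encoding scheme with $r=m$ symbols, $\sigma_1(y_j)=\tau_j$ and $\sigma_2(y_j)=\tau_{m+1-j}$ for all $j\in[m]$. Then (1) this scheme maximizes the eavesdropper distortion $D_{ach}(1)$ over all encoding schemes with one key bit; (2) if $\mathcal{Y}$ is regularly spaced, i.e. $\mathcal{Y}=\{y,y+d,\dots,y+(m-1)d\}$ for some $y,d\in\mathbb{R}$, then this scheme achieves $D_{ach}(1)=D_{max}$.
   Context: Single-source setting. $Y$ is a real random variable taking values in a finite set $\mathcal{Y}=\{y_1,\dots,y_m\}\subset\mathbb{R}$ of distinct values. A source and a receiver share a secret key $K$, uniform on $\{1,\dots,2^k\}$ and independent of $Y$. An encoding scheme consists of a finite set of transmission symbols $\{\tau_1,\dots,\tau_r\}$ together with, for each key value $i\in\{1,\dots,2^k\}$, an injective map $\sigma_i:\mathcal{Y}\to\{\tau_1,\dots,\tau_r\}$; the source transmits $T=\sigma_K(Y)$. An eavesdropper observes $T$ but not $K$. Her distortion is $D_{ach}(k)=\min_{\hat f}\mathbb{E}[(Y-\hat f(T))^2]$ (minimum over all functions of the observed symbol), and $D_{max}=\mathrm{var}(Y)$. *)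

theory Defs
  imports Complex_Main
begin

definition is_scheme :: "nat \<Rightarrow> nat \<Rightarrow> nat \<Rightarrow> (nat \<Rightarrow> nat \<Rightarrow> nat) \<Rightarrow> bool" where
  "is_scheme k m r \<sigma> \<longleftrightarrow>
     (\<forall>i\<in>{1..2^k}. inj_on (\<sigma> i) {1..m} \<and> \<sigma> i ` {1..m} \<subseteq> {1..r})"

text \<open>Expected squared error of an estimator f of Y from T = sigma K (Y),
  with (K,Y) uniform on {1..2^k} x {1..m}.\<close>
definition mse :: "nat \<Rightarrow> (nat \<Rightarrow> real) \<Rightarrow> nat \<Rightarrow> (nat \<Rightarrow> nat \<Rightarrow> nat) \<Rightarrow> (nat \<Rightarrow> real) \<Rightarrow> real" where
  "mse k y m \<sigma> f =
     (\<Sum>i\<in>{1..2^k}. \<Sum>j\<in>{1..m}. (y j - f (\<sigma> i j))\<^sup>2) / (2 ^ k * real m)"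

text \<open>Eavesdropper distortion: minimum (infimum, which is attained) over all
  estimators f of the observed symbol.\<close>
definition D_ach :: "nat \<Rightarrow> (nat \<Rightarrow> real) \<Rightarrow> nat \<Rightarrow> (nat \<Rightarrow> nat \<Rightarrow> nat) \<Rightarrow> real" where
  "D_ach k y m \<sigma> = (INF f :: nat \<Rightarrow> real. mse k y m \<sigma> f)"

definition D_max :: "(nat \<Rightarrow> real) \<Rightarrow> nat \<Rightarrow> real" where
  "D_max y m =
     (let \<mu> = (\<Sum>j\<in>{1..m}. y j) / real m
      in (\<Sum>j\<in>{1..m}. (y j - \<mu>)\<^sup>2) / real m)"

definition reversal :: "nat \<Rightarrow> nat \<Rightarrow> nat \<Rightarrow> nat" where
  "reversal m i j = (if i = 1 then j else m + 1 - j)"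

end

theory Submission
  imports Defs
begin

lemma exch:
  fixes M n c l :: real
  assumes "n \<le> c" "c \<le> M" "n \<le> l" "l \<le> M"
  shows "(M-c)\<^sup>2 + (n-l)\<^sup>2 - (c-l)\<^sup>2 \<le> (M-n)\<^sup>2"
proof -
  have e: "(M-c)\<^sup>2 + (n-l)\<^sup>2 - (c-l)\<^sup>2 - (M-n)\<^sup>2 = -2*((c-n)*(M-l))"
    by (simp add: power2_eq_square algebra_simps)
  have "0 \<le> (c-n)*(M-l)" using assms by simp
  then show ?thesis using e by linarith
qed

lemma sq_le: fixes a b c :: real assumes "b \<le> c" "c \<le> a" shows "(c - b)\<^sup>2 \<le> (a - b)\<^sup>2"
  using assms by (intro power_mono) auto

lemma sq_le2: fixes a b c :: real assumes "b \<le> c" "c \<le> a" shows "(a - c)\<^sup>2 \<le> (a - b)\<^sup>2"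
  using assms by (intro power_mono) auto

lemma dual:
  fixes y :: "nat \<Rightarrow> real"
  assumes "\<forall>i j. a \<le> i \<and> i \<le> j \<and> j \<le> a + n \<longrightarrow> y j \<le> y i"
  shows "\<exists>u. (\<forall>j\<in>{a..a+n}. \<forall>l\<in>{a..a+n}. (y j - y l)\<^sup>2 \<le> 2*(u j + u l))
           \<and> (\<forall>j\<in>{a..a+n}. 2*(u j + u (2*a+n-j)) = (y j - y (2*a+n-j))\<^sup>2)"
  using assms
proof (induction n arbitrary: a rule: less_induct)
  case (less n)
  consider "n = 0" | "n = 1" | n' where "n = Suc (Suc n')"
    by (metis One_nat_def not0_implies_Suc)
  then show ?case
  proof cases
    case 1
    then show ?thesis by (intro exI[of _ "\<lambda>_. 0"]) auto
  next
    case 2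
    have r: "j \<in> {a..a+n} \<Longrightarrow> j = a \<or> j = a+1" for j using 2 by auto
    show ?thesis
      apply (intro exI[of _ "\<lambda>_. (y a - y (a+1))\<^sup>2/4"] conjI ballI)
      subgoal for j l using r[of j] r[of l] 2 by (auto simp: power2_commute)
      subgoal for j using r[of j] 2 by (auto simp: power2_commute)
      done
  next
    case 3
    define b where "b = a + n"
    define I where "I = {a+1..a+1+n'}"
    have hI: "\<forall>i j. a+1 \<le> i \<and> i \<le> j \<and> j \<le> a+1 + n' \<longrightarrow> y j \<le> y i"
      using less.prems 3 by auto
    obtain u' where u'1: "\<forall>j\<in>I. \<forall>l\<in>I. (y j - y l)\<^sup>2 \<le> 2*(u' j + u' l)"
      and u'2: "\<forall>j\<in>I. 2*(u' j + u' (2*(a+1)+n'-j)) = (y j - y (2*(a+1)+n'-j))\<^sup>2"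
      using less.IH[of n' "a+1"] hI 3 unfolding I_def by auto
    have u'0: "l \<in> I \<Longrightarrow> 0 \<le> u' l" for l using u'1 by fastforce
    have mono: "a \<le> i \<Longrightarrow> i \<le> j \<Longrightarrow> j \<le> b \<Longrightarrow> y j \<le> y i" for i j
      using less.prems b_def by auto
    have Ib: "l \<in> I \<Longrightarrow> y b \<le> y l \<and> y l \<le> y a" for l
      using mono[of l b] mono[of a l] 3 unfolding I_def b_def by auto
    define S where "S = insert 0 ((\<lambda>l. (y a - y l)\<^sup>2/2 - u' l) ` I)"
    define ua where "ua = Max S"
    define ub where "ub = (y a - y b)\<^sup>2/2 - ua"
    have fS: "finite S" unfolding S_def I_def by auto
    have ua0: "0 \<le> ua" unfolding ua_def using fS S_def by auto
    have uaI: "l \<in> I \<Longrightarrow> (y a - y l)\<^sup>2/2 - u' l \<le> ua" for l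
      unfolding ua_def using fS S_def by auto
    have uain: "ua \<in> S" unfolding ua_def using fS S_def by (intro Max_in) auto
    have key: "0 \<le> ub \<and> (\<forall>l\<in>I. (y b - y l)\<^sup>2 \<le> 2*(ub + u' l))"
    proof (cases "ua = 0")
      case True
      have "0 \<le> ub" unfolding ub_def True by simp
      moreover have "(y b - y l)\<^sup>2 \<le> 2*(ub + u' l)" if "l \<in> I" for l
      proof -
        have "(y l - y b)\<^sup>2 \<le> (y a - y b)\<^sup>2" using Ib[OF that] by (intro sq_le) auto
        then show ?thesis using u'0[OF that] unfolding ub_def True by (simp add: power2_commute)
      qed
      ultimately show ?thesis by auto
    next
      case False
      then obtain c where c: "c \<in> I" "ua = (y a - y c)\<^sup>2/2 - u' c" using uain S_def by auto
      have "(y a - y c)\<^sup>2 \<le> (y a - y b)\<^sup>2" using Ib[OF c(1)] by (intro sq_le2) auto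
      then have "0 \<le> ub" unfolding ub_def c(2) using u'0[OF c(1)] by simp
      moreover have "(y b - y l)\<^sup>2 \<le> 2*(ub + u' l)" if "l \<in> I" for l
      proof -
        have "(y a - y c)\<^sup>2 + (y b - y l)\<^sup>2 - (y c - y l)\<^sup>2 \<le> (y a - y b)\<^sup>2"
          using Ib[OF c(1)] Ib[OF that] by (intro exch) auto
        moreover have "(y c - y l)\<^sup>2 \<le> 2*(u' c + u' l)" using u'1 c(1) that by auto
        ultimately show ?thesis unfolding ub_def c(2) by simp
      qed
      ultimately show ?thesis by auto
    qed
    define u where "u = u'(a := ua, b := ub)"
    have ab: "a \<noteq> b" "a \<notin> I" "b \<notin> I" using 3 unfolding b_def I_def by auto
    have rng: "j \<in> {a..a+n} \<Longrightarrow> j = a \<or> j = b \<or> j \<in> I" for j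
      using 3 unfolding b_def I_def by auto
    have ua_b: "u a = ua" "u b = ub" "l \<in> I \<Longrightarrow> u l = u' l" for l
      using ab unfolding u_def by auto
    have refl: "2*a+n-j \<in> I" "2*(a+1)+n'-j = 2*a+n-j" if "j \<in> I" for j
      using that 3 unfolding I_def by auto
    have P: "(y j - y l)\<^sup>2 \<le> 2*(u j + u l)" if "j \<in> {a..a+n}" "l \<in> {a..a+n}" for j l
    proof -
      have A: "(y a - y l)\<^sup>2 \<le> 2*(u a + u l)" if "l \<in> {a..a+n}" for l
        using rng[OF that]
      proof (elim disjE)
        assume "l = a" then show ?thesis using ua0 ua_b by simp
      next
        assume "l = b" then show ?thesis using ua_b ub_def by simp
      next
        assume "l \<in> I" then show ?thesis using uaI[of l] ua_b by simp
      qed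
      have B: "(y b - y l)\<^sup>2 \<le> 2*(u b + u l)" if "l \<in> {a..a+n}" for l
        using rng[OF that]
      proof (elim disjE)
        assume "l = a" then show ?thesis using ua_b ub_def by (simp add: power2_commute)
      next
        assume "l = b" then show ?thesis using key ua_b by simp
      next
        assume "l \<in> I" then show ?thesis using key ua_b by simp
      qed
      show ?thesis using rng[OF that(1)]
      proof (elim disjE)
        assume "j = a" then show ?thesis using A[OF that(2)] by simp
      next
        assume "j = b" then show ?thesis using B[OF that(2)] by simp
      next
        assume jI: "j \<in> I"
        show ?thesis using rng[OF that(2)]
        proof (elim disjE)
          assume "l = a" then show ?thesis using A[OF that(1)] by (simp add: power2_commute add.commute)
        next
          assume "l = b" then show ?thesis using B[OF that(1)] by (simp add: power2_commute add.commute)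
        next
          assume "l \<in> I" then show ?thesis using u'1 jI ua_b by simp
        qed
      qed
    qed
    have Q: "2*(u j + u (2*a+n-j)) = (y j - y (2*a+n-j))\<^sup>2" if "j \<in> {a..a+n}" for j
      using rng[OF that]
    proof (elim disjE)
      assume "j = a"
      then have "2*a+n-j = b" unfolding b_def by simp
      then show ?thesis using \<open>j = a\<close> ua_b ub_def by simp
    next
      assume "j = b"
      then have "2*a+n-j = a" unfolding b_def by simp
      then show ?thesis using \<open>j = b\<close> ua_b ub_def by (simp add: power2_commute)
    next
      assume jI: "j \<in> I"
      have "2*(u' j + u' (2*(a+1)+n'-j)) = (y j - y (2*(a+1)+n'-j))\<^sup>2" using u'2 jI by blast
      then show ?thesis using refl[OF jI] ua_b(3)[OF jI] ua_b(3)[OF refl(1)[OF jI]] by simp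
    qed
    show ?thesis using P Q by blast
  qed
qed


lemma match_bound:
  fixes y :: "nat \<Rightarrow> real"
  assumes mono: "\<forall>i j. 1 \<le> i \<and> i \<le> j \<and> j \<le> m \<longrightarrow> y j \<le> y i"
    and D: "D \<subseteq> {1..m}" and inj: "inj_on \<pi> D" and im: "\<pi> ` D \<subseteq> {1..m}"
  shows "(\<Sum>j\<in>D. (y j - y (\<pi> j))\<^sup>2) \<le> (\<Sum>j\<in>{1..m}. (y j - y (m+1-j))\<^sup>2)"
proof (cases "m = 0")
  case True then show ?thesis using D by simp
next
  case False
  have e1: "{1..1+(m-1)} = {1..m}" using False by auto
  have e2: "2*1+(m-1)-j = m+1-j" for j using False by auto
  obtain u where u1: "\<forall>j\<in>{1..m}. \<forall>l\<in>{1..m}. (y j - y l)\<^sup>2 \<le> 2*(u j + u l)"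
    and u2: "\<forall>j\<in>{1..m}. 2*(u j + u (m+1-j)) = (y j - y (m+1-j))\<^sup>2"
    using dual[of 1 "m-1" y] mono False unfolding e1 e2 by auto
  have u0: "l \<in> {1..m} \<Longrightarrow> 0 \<le> u l" for l using u1 by fastforce
  have fD: "finite D" using D finite_subset by blast
  have s1: "(\<Sum>j\<in>D. (y j - y (\<pi> j))\<^sup>2) \<le> (\<Sum>j\<in>D. 2*(u j + u (\<pi> j)))"
  proof (intro sum_mono)
    fix j assume "j \<in> D"
    then have "j \<in> {1..m}" "\<pi> j \<in> {1..m}" using D im by auto
    then show "(y j - y (\<pi> j))\<^sup>2 \<le> 2*(u j + u (\<pi> j))" using u1 by blast
  qed
  have s2: "(\<Sum>j\<in>D. 2*(u j + u (\<pi> j))) = 2 * (\<Sum>j\<in>D. u j) + 2 * (\<Sum>j\<in>D. u (\<pi> j))"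
    by (simp add: sum.distrib sum_distrib_left)
  have s3: "(\<Sum>j\<in>D. u (\<pi> j)) = (\<Sum>j\<in>\<pi>`D. u j)"
    using sum.reindex[OF inj, of u] by simp
  have s4: "(\<Sum>j\<in>\<pi>`D. u j) \<le> (\<Sum>j\<in>{1..m}. u j)"
    using im u0 by (intro sum_mono2) auto
  have s5: "(\<Sum>j\<in>D. u j) \<le> (\<Sum>j\<in>{1..m}. u j)"
    using D u0 by (intro sum_mono2) auto
  have s6: "(\<Sum>j\<in>{1..m}. u j) = (\<Sum>j\<in>{1..m}. u (m+1-j))"
    using sum.atLeastAtMost_rev[of u 1 m] by (simp add: add.commute)
  have s7: "(\<Sum>j\<in>{1..m}. 2*(u j + u (m+1-j))) = 2 * (\<Sum>j\<in>{1..m}. u j) + 2 * (\<Sum>j\<in>{1..m}. u (m+1-j))"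
    by (simp add: sum.distrib sum_distrib_left)
  have s8: "(\<Sum>j\<in>{1..m}. 2*(u j + u (m+1-j))) = (\<Sum>j\<in>{1..m}. (y j - y (m+1-j))\<^sup>2)"
    using u2 by (intro sum.cong) auto
  show ?thesis using s1 s2 s3 s4 s5 s6 s7 s8 by linarith
qed

lemma mse_nonneg: "0 \<le> mse k y m \<sigma> f"
  unfolding mse_def by (intro divide_nonneg_nonneg sum_nonneg) auto

lemma D_le: "D_ach k y m \<sigma> \<le> mse k y m \<sigma> f"
  unfolding D_ach_def
  by (rule cINF_lower) (auto intro!: bdd_belowI[where m=0] mse_nonneg)

lemma sum12: "(\<Sum>i\<in>{1..2::nat}. g i) = g 1 + (g 2 :: real)"
proof -
  have "{1..2::nat} = {1,2}" by auto
  then show ?thesis by simp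
qed

lemma mid: fixes a b :: real shows "(a - (a+b)/2)\<^sup>2 = (a-b)\<^sup>2/4" "(b - (a+b)/2)\<^sup>2 = (a-b)\<^sup>2/4"
  by (simp_all add: power2_eq_square field_simps)

lemma lowpair: fixes a b c :: real shows "(a-b)\<^sup>2/2 \<le> (a - c)\<^sup>2 + (b - c)\<^sup>2"
proof -
  have "(a - c)\<^sup>2 + (b - c)\<^sup>2 - (a-b)\<^sup>2/2 = 2*((a+b)/2 - c)\<^sup>2"
    by (simp add: power2_eq_square field_simps)
  moreover have "0 \<le> 2*((a+b)/2 - c)\<^sup>2" by simp
  ultimately show ?thesis by linarith
qed

lemma mse_rev:
  "mse 1 y m (reversal m) f =
   (\<Sum>j\<in>{1..m}. (y j - f j)\<^sup>2 + (y (m+1-j) - f j)\<^sup>2) / (2 * real m)"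
proof -
  have "(\<Sum>j\<in>{1..m}. (y j - f (m+1-j))\<^sup>2) = (\<Sum>j\<in>{1..m}. (y (m+1-j) - f (m + 1 - (m+1-j)))\<^sup>2)"
    using sum.atLeastAtMost_rev[of "\<lambda>j. (y j - f (m+1-j))\<^sup>2" 1 m] by (simp add: add.commute)
  also have "\<dots> = (\<Sum>j\<in>{1..m}. (y (m+1-j) - f j)\<^sup>2)"
    by (intro sum.cong) auto
  finally have r: "(\<Sum>j\<in>{1..m}. (y j - f (m+1-j))\<^sup>2) = (\<Sum>j\<in>{1..m}. (y (m+1-j) - f j)\<^sup>2)" .
  have "mse 1 y m (reversal m) f = ((\<Sum>j\<in>{1..m}. (y j - f j)\<^sup>2) + (\<Sum>j\<in>{1..m}. (y j - f (m+1-j))\<^sup>2)) / (2 * real m)"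
    unfolding mse_def power_one_right sum12 reversal_def by simp
  then show ?thesis using r by (simp add: sum.distrib)
qed

lemma D_rev:
  assumes "m \<ge> 1"
  shows "D_ach 1 y m (reversal m) = (\<Sum>j\<in>{1..m}. (y j - y (m+1-j))\<^sup>2) / (4 * real m)"
proof (rule antisym)
  define f where "f j = (y j + y (m+1-j))/2" for j
  have "D_ach 1 y m (reversal m) \<le> mse 1 y m (reversal m) f" by (rule D_le)
  also have "\<dots> = (\<Sum>j\<in>{1..m}. (y j - y (m+1-j))\<^sup>2 / 2) / (2 * real m)"
    unfolding mse_rev f_def mid by (intro arg_cong2[where f="(/)"] sum.cong) auto
  also have "\<dots> = (\<Sum>j\<in>{1..m}. (y j - y (m+1-j))\<^sup>2) / (4 * real m)"
    by (simp add: sum_divide_distrib[symmetric])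
  finally show "D_ach 1 y m (reversal m) \<le> \<dots>" .
next
  show "(\<Sum>j\<in>{1..m}. (y j - y (m+1-j))\<^sup>2) / (4 * real m) \<le> D_ach 1 y m (reversal m)"
    unfolding D_ach_def
  proof (rule cINF_greatest)
    fix f
    have "(\<Sum>j\<in>{1..m}. (y j - y (m+1-j))\<^sup>2) / (4 * real m)
        = (\<Sum>j\<in>{1..m}. (y j - y (m+1-j))\<^sup>2 / 2) / (2 * real m)"
      by (simp add: sum_divide_distrib[symmetric])
    also have "\<dots> \<le> (\<Sum>j\<in>{1..m}. (y j - f j)\<^sup>2 + (y (m+1-j) - f j)\<^sup>2) / (2 * real m)"
      using assms by (intro divide_right_mono sum_mono lowpair) auto
    finally show "(\<Sum>j\<in>{1..m}. (y j - y (m+1-j))\<^sup>2) / (4 * real m) \<le> mse 1 y m (reversal m) f"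
      unfolding mse_rev .
  qed auto
qed


lemma D_gen:
  fixes y :: "nat \<Rightarrow> real"
  assumes mono: "\<forall>i j. 1 \<le> i \<and> i \<le> j \<and> j \<le> m \<longrightarrow> y j \<le> y i"
    and sch: "is_scheme 1 m r \<sigma>"
  shows "D_ach 1 y m \<sigma> \<le> (\<Sum>j\<in>{1..m}. (y j - y (m+1-j))\<^sup>2) / (4 * real m)"
proof -
  define A where "A = {1..m}"
  have inj1: "inj_on (\<sigma> 1) A" and inj2: "inj_on (\<sigma> 2) A"
    using sch unfolding is_scheme_def A_def by auto
  define g1 where "g1 = inv_into A (\<sigma> 1)"
  define g2 where "g2 = inv_into A (\<sigma> 2)"
  define f where "f t = (if t \<in> \<sigma> 1 ` A \<and> t \<in> \<sigma> 2 ` A then (y (g1 t) + y (g2 t))/2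
      else if t \<in> \<sigma> 1 ` A then y (g1 t) else y (g2 t))" for t
  define D where "D = {j\<in>A. \<sigma> 1 j \<in> \<sigma> 2 ` A}"
  define \<pi> where "\<pi> j = g2 (\<sigma> 1 j)" for j
  have g1s: "j \<in> A \<Longrightarrow> g1 (\<sigma> 1 j) = j" for j unfolding g1_def using inj1 by (simp add: inv_into_f_f)
  have g2s: "j \<in> A \<Longrightarrow> g2 (\<sigma> 2 j) = j" for j unfolding g2_def using inj2 by (simp add: inv_into_f_f)
  have piA: "j \<in> D \<Longrightarrow> \<pi> j \<in> A" for j unfolding \<pi>_def D_def g2_def by (auto intro: inv_into_into)
  have pis: "j \<in> D \<Longrightarrow> \<sigma> 2 (\<pi> j) = \<sigma> 1 j" for j unfolding \<pi>_def D_def g2_def by (auto intro: f_inv_into_f)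
  have injpi: "inj_on \<pi> D"
  proof (rule inj_onI)
    fix j j' assume "j \<in> D" "j' \<in> D" "\<pi> j = \<pi> j'"
    then have "\<sigma> 1 j = \<sigma> 1 j'" using pis by metis
    then show "j = j'" using inj1 \<open>j \<in> D\<close> \<open>j' \<in> D\<close> unfolding D_def by (auto dest: inj_onD)
  qed
  have DA: "D \<subseteq> A" unfolding D_def by auto
  have fA: "finite A" unfolding A_def by simp
  have S1: "(\<Sum>j\<in>A. (y j - f (\<sigma> 1 j))\<^sup>2) = (\<Sum>j\<in>D. (y j - y (\<pi> j))\<^sup>2/4)"
  proof -
    have "(\<Sum>j\<in>A. (y j - f (\<sigma> 1 j))\<^sup>2) = (\<Sum>j\<in>A. if \<sigma> 1 j \<in> \<sigma> 2 ` A then (y j - y (\<pi> j))\<^sup>2/4 else 0)"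
    proof (intro sum.cong refl)
      fix j assume j: "j \<in> A"
      show "(y j - f (\<sigma> 1 j))\<^sup>2 = (if \<sigma> 1 j \<in> \<sigma> 2 ` A then (y j - y (\<pi> j))\<^sup>2/4 else 0)"
        unfolding f_def \<pi>_def using j g1s[OF j] mid(1) by auto
    qed
    also have "\<dots> = (\<Sum>j\<in>D. (y j - y (\<pi> j))\<^sup>2/4)"
      unfolding D_def using sum.inter_filter[OF fA, symmetric] by simp
    finally show ?thesis .
  qed
  have E: "{l\<in>A. \<sigma> 2 l \<in> \<sigma> 1 ` A} = \<pi> ` D"
  proof
    show "{l\<in>A. \<sigma> 2 l \<in> \<sigma> 1 ` A} \<subseteq> \<pi> ` D"
    proof
      fix l assume "l \<in> {l\<in>A. \<sigma> 2 l \<in> \<sigma> 1 ` A}"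
      then obtain j where j: "j \<in> A" "\<sigma> 2 l = \<sigma> 1 j" "l \<in> A" by auto
      then have "j \<in> D" unfolding D_def by (metis (mono_tags, lifting) image_eqI mem_Collect_eq)
      moreover have "\<pi> j = l" unfolding \<pi>_def using j g2s by metis
      ultimately show "l \<in> \<pi> ` D" by blast
    qed
  next
    show "\<pi> ` D \<subseteq> {l\<in>A. \<sigma> 2 l \<in> \<sigma> 1 ` A}"
      using piA pis DA by auto
  qed
  have S2: "(\<Sum>l\<in>A. (y l - f (\<sigma> 2 l))\<^sup>2) = (\<Sum>j\<in>D. (y j - y (\<pi> j))\<^sup>2/4)"
  proof -
    have "(\<Sum>l\<in>A. (y l - f (\<sigma> 2 l))\<^sup>2) = (\<Sum>l\<in>A. if \<sigma> 2 l \<in> \<sigma> 1 ` A then (y l - y (g1 (\<sigma> 2 l)))\<^sup>2/4 else 0)"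
    proof (intro sum.cong refl)
      fix l assume l: "l \<in> A"
      show "(y l - f (\<sigma> 2 l))\<^sup>2 = (if \<sigma> 2 l \<in> \<sigma> 1 ` A then (y l - y (g1 (\<sigma> 2 l)))\<^sup>2/4 else 0)"
        unfolding f_def using l g2s[OF l] mid(2) by (auto simp: power2_commute)
    qed
    also have "\<dots> = (\<Sum>l\<in>\<pi>`D. (y l - y (g1 (\<sigma> 2 l)))\<^sup>2/4)"
      unfolding E[symmetric] using sum.inter_filter[OF fA, symmetric] by simp
    also have "\<dots> = (\<Sum>j\<in>D. (y (\<pi> j) - y (g1 (\<sigma> 2 (\<pi> j))))\<^sup>2/4)"
      using sum.reindex[OF injpi] by simp
    also have "\<dots> = (\<Sum>j\<in>D. (y j - y (\<pi> j))\<^sup>2/4)"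
    proof (intro sum.cong refl)
      fix j assume j: "j \<in> D"
      then have "g1 (\<sigma> 2 (\<pi> j)) = j" using pis g1s DA by auto
      then show "(y (\<pi> j) - y (g1 (\<sigma> 2 (\<pi> j))))\<^sup>2/4 = (y j - y (\<pi> j))\<^sup>2/4"
        by (simp add: power2_commute)
    qed
    finally show ?thesis .
  qed
  have MB: "(\<Sum>j\<in>D. (y j - y (\<pi> j))\<^sup>2) \<le> (\<Sum>j\<in>{1..m}. (y j - y (m+1-j))\<^sup>2)"
  proof -
    have "\<pi> ` D \<subseteq> {1..m}" using piA unfolding A_def by auto
    then show ?thesis using match_bound[OF mono, of D \<pi>] DA injpi unfolding A_def by blast
  qed
  have "mse 1 y m \<sigma> f = ((\<Sum>j\<in>A. (y j - f (\<sigma> 1 j))\<^sup>2) + (\<Sum>l\<in>A. (y l - f (\<sigma> 2 l))\<^sup>2)) / (2 * real m)"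
    unfolding mse_def power_one_right sum12 A_def by simp
  also have "\<dots> = ((\<Sum>j\<in>D. (y j - y (\<pi> j))\<^sup>2) / 2) / (2 * real m)"
    unfolding S1 S2 by (simp add: sum_divide_distrib[symmetric])
  also have "\<dots> \<le> ((\<Sum>j\<in>{1..m}. (y j - y (m+1-j))\<^sup>2) / 2) / (2 * real m)"
    using MB by (intro divide_right_mono) auto
  also have "\<dots> = (\<Sum>j\<in>{1..m}. (y j - y (m+1-j))\<^sup>2) / (4 * real m)" by simp
  finally show ?thesis using D_le[of 1 y m \<sigma> f] by linarith
qed


lemma rank:
  fixes f :: "nat \<Rightarrow> real"
  assumes dec: "\<forall>i j. 1 \<le> i \<and> i < j \<and> j \<le> m \<longrightarrow> f j < f i" and j: "j \<in> {1..m}"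
  shows "card {x \<in> f ` {1..m}. f j < x} = j - 1"
proof -
  have "{x \<in> f ` {1..m}. f j < x} = f ` {1..<j}"
  proof
    show "{x \<in> f ` {1..m}. f j < x} \<subseteq> f ` {1..<j}"
    proof
      fix x assume "x \<in> {x \<in> f ` {1..m}. f j < x}"
      then obtain i where i: "i \<in> {1..m}" "x = f i" "f j < f i" by auto
      have "i < j"
      proof (rule ccontr)
        assume "\<not> i < j"
        then have "i = j \<or> j < i" by auto
        then show False using dec j i by fastforce
      qed
      then show "x \<in> f ` {1..<j}" using i by auto
    qed
  next
    show "f ` {1..<j} \<subseteq> {x \<in> f ` {1..m}. f j < x}" using dec j by auto
  qed
  moreover have "inj_on f {1..<j}"
  proof (rule inj_onI)
    fix a b assume "a \<in> {1..<j}" "b \<in> {1..<j}" "f a = f b"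
    then show "a = b" using dec j by (metis atLeastLessThan_iff atLeastAtMost_iff less_imp_le_nat
        linorder_neqE_nat order.strict_trans1 order_less_irrefl)
  qed
  ultimately show ?thesis by (simp add: card_image)
qed

lemma uniq:
  fixes f g :: "nat \<Rightarrow> real"
  assumes df: "\<forall>i j. 1 \<le> i \<and> i < j \<and> j \<le> m \<longrightarrow> f j < f i"
    and dg: "\<forall>i j. 1 \<le> i \<and> i < j \<and> j \<le> m \<longrightarrow> g j < g i"
    and im: "f ` {1..m} = g ` {1..m}" and j: "j \<in> {1..m}"
  shows "f j = g j"
proof -
  obtain j' where j': "j' \<in> {1..m}" "f j = g j'" using im j by blast
  have "j - 1 = j' - 1" using rank[OF df j] rank[OF dg j'(1)] im j'(2) by simp
  then have "j = j'" using j j' by auto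
  then show ?thesis using j' by simp
qed

lemma AP:
  fixes y :: "nat \<Rightarrow> real"
  assumes m: "m \<ge> 1" and dec: "\<forall>i j. 1 \<le> i \<and> i < j \<and> j \<le> m \<longrightarrow> y j < y i"
    and ap: "y ` {1..m} = {y0 + real i * d | i. i < m}"
  shows "\<exists>c e. \<forall>j\<in>{1..m}. y j = c - real j * e"
proof (cases "m = 1")
  case True then show ?thesis by (intro exI[of _ "y 1"] exI[of _ 0]) auto
next
  case False
  then have m2: "m \<ge> 2" using m by auto
  have "d \<noteq> 0"
  proof
    assume "d = 0"
    have "y 1 \<in> y ` {1..m}" "y 2 \<in> y ` {1..m}" using m2 by auto
    then have "y 1 = y0" "y 2 = y0" using ap \<open>d = 0\<close> by auto
    moreover have "y 2 < y 1" using dec m2 by simp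
    ultimately show False by simp
  qed
  then consider "d > 0" | "d < 0" by linarith
  then show ?thesis
  proof cases
    case 1
    define z where "z j = y0 + real (m - j) * d" for j
    have dz: "\<forall>i j. 1 \<le> i \<and> i < j \<and> j \<le> m \<longrightarrow> z j < z i"
    proof (intro allI impI)
      fix i j assume h: "1 \<le> i \<and> i < j \<and> j \<le> m"
      then have "m - j < m - i" by arith
      then have "real (m - j) < real (m - i)" by simp
      then show "z j < z i" unfolding z_def using 1 by simp
    qed
    have iz: "z ` {1..m} = {y0 + real i * d | i. i < m}"
    proof
      show "z ` {1..m} \<subseteq> {y0 + real i * d | i. i < m}"
      proof
        fix x assume "x \<in> z ` {1..m}"
        then obtain j where j: "j \<in> {1..m}" "x = z j" by blast
        then have "m - j < m" "j - 1 < m" by auto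
        then show "x \<in> {y0 + real i * d | i. i < m}" using j unfolding z_def by blast
      qed
      show "{y0 + real i * d | i. i < m} \<subseteq> z ` {1..m}"
      proof
        fix x assume "x \<in> {y0 + real i * d | i. i < m}"
        then obtain i where i: "i < m" "x = y0 + real i * d" by auto
        then have "x = z (m - i)" "m - i \<in> {1..m}" unfolding z_def by auto
        then show "x \<in> z ` {1..m}" by blast
      qed
    qed
    have "\<forall>j\<in>{1..m}. y j = (y0 + real m * d) - real j * d"
    proof
      fix j assume j: "j \<in> {1..m}"
      then have "y j = z j" using uniq[OF dec dz _ j] ap iz by simp
      then show "y j = (y0 + real m * d) - real j * d" unfolding z_def using j
        by (simp add: of_nat_diff algebra_simps)
    qed
    then show ?thesis by blast
  next
    case 2
    define z where "z j = y0 + real (j - 1) * d" for j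
    have dz: "\<forall>i j. 1 \<le> i \<and> i < j \<and> j \<le> m \<longrightarrow> z j < z i"
    proof (intro allI impI)
      fix i j assume h: "1 \<le> i \<and> i < j \<and> j \<le> m"
      then have "i - 1 < j - 1" by arith
      then have "real (i - 1) < real (j - 1)" by simp
      then have "real (j - 1) * d < real (i - 1) * d" using 2 by (rule mult_strict_right_mono_neg)
      then show "z j < z i" unfolding z_def by simp
    qed
    have iz: "z ` {1..m} = {y0 + real i * d | i. i < m}"
    proof
      show "z ` {1..m} \<subseteq> {y0 + real i * d | i. i < m}"
      proof
        fix x assume "x \<in> z ` {1..m}"
        then obtain j where j: "j \<in> {1..m}" "x = z j" by blast
        then have "m - j < m" "j - 1 < m" by auto
        then show "x \<in> {y0 + real i * d | i. i < m}" using j unfolding z_def by blast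
      qed
      show "{y0 + real i * d | i. i < m} \<subseteq> z ` {1..m}"
      proof
        fix x assume "x \<in> {y0 + real i * d | i. i < m}"
        then obtain i where i: "i < m" "x = y0 + real i * d" by auto
        then have "x = z (i + 1)" "i + 1 \<in> {1..m}" unfolding z_def by auto
        then show "x \<in> z ` {1..m}" by blast
      qed
    qed
    have "\<forall>j\<in>{1..m}. y j = (y0 - d) - real j * (- d)"
    proof
      fix j assume j: "j \<in> {1..m}"
      then have "y j = z j" using uniq[OF dec dz _ j] ap iz by simp
      then show "y j = (y0 - d) - real j * (- d)" unfolding z_def using j
        by (simp add: of_nat_diff algebra_simps)
    qed
    then show ?thesis by blast
  qed
qed

lemma AP_val:
  fixes y :: "nat \<Rightarrow> real"
  assumes m: "m \<ge> 1" and y: "\<forall>j\<in>{1..m}. y j = c - real j * e"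
  shows "(\<Sum>j\<in>{1..m}. (y j - y (m+1-j))\<^sup>2) / (4 * real m) = D_max y m"
proof -
  have g: "2 * (\<Sum>j\<in>{1..m}. real j) = real m * (real m + 1)"
    using double_gauss_sum_from_Suc_0[of m, where 'a=real] by simp
  have s: "(\<Sum>j\<in>{1..m}. y j) = real m * c - e * (\<Sum>j\<in>{1..m}. real j)"
    using y by (simp add: sum.cong[OF refl, of _ y "\<lambda>j. c - real j * e"] sum_subtractf
        sum_distrib_left mult.commute)
  have mu: "(\<Sum>j\<in>{1..m}. y j) / real m = c - e * (real m + 1) / 2"
  proof -
    have "2 * (\<Sum>j\<in>{1..m}. y j) = 2 * real m * c - e * (2 * (\<Sum>j\<in>{1..m}. real j))"
      unfolding s by (simp add: algebra_simps)
    also have "\<dots> = 2 * real m * c - e * (real m * (real m + 1))" unfolding g ..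
    finally show ?thesis using m by (simp add: field_simps)
  qed
  have L: "(\<Sum>j\<in>{1..m}. (y j - y (m+1-j))\<^sup>2) = (\<Sum>j\<in>{1..m}. (e * (real m + 1 - 2 * real j))\<^sup>2)"
  proof (intro sum.cong refl)
    fix j assume j: "j \<in> {1..m}"
    then have "m+1-j \<in> {1..m}" by auto
    then have a: "y j = c - real j * e" "y (m+1-j) = c - real (m+1-j) * e" using y j by auto
    have b: "real (m+1-j) = real m + 1 - real j" using j by (simp add: of_nat_diff)
    show "(y j - y (m+1-j))\<^sup>2 = (e * (real m + 1 - 2 * real j))\<^sup>2"
      unfolding a b by (simp add: algebra_simps)
  qed
  have R: "(\<Sum>j\<in>{1..m}. (y j - (c - e * (real m + 1) / 2))\<^sup>2) = (\<Sum>j\<in>{1..m}. (e * (real m + 1 - 2 * real j))\<^sup>2 / 4)"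
  proof (intro sum.cong refl)
    fix j assume j: "j \<in> {1..m}"
    show "(y j - (c - e * (real m + 1) / 2))\<^sup>2 = (e * (real m + 1 - 2 * real j))\<^sup>2 / 4"
    proof -
      have yj: "y j = c - real j * e" using y j by auto
      have "y j - (c - e * (real m + 1) / 2) = (e * (real m + 1 - 2 * real j)) / 2"
        unfolding yj by (simp add: field_simps)
      then have "(y j - (c - e * (real m + 1) / 2))\<^sup>2 = ((e * (real m + 1 - 2 * real j)) / 2)\<^sup>2" by (rule arg_cong)
      also have "\<dots> = (e * (real m + 1 - 2 * real j))\<^sup>2 / 4" by (simp add: power_divide)
      finally show ?thesis .
    qed
  qed
  define T where "T = (\<Sum>j\<in>{1..m}. (e * (real m + 1 - 2 * real j))\<^sup>2)"
  have d1: "D_max y m = (\<Sum>j\<in>{1..m}. (e * (real m + 1 - 2 * real j))\<^sup>2 / 4) / real m"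
    unfolding D_max_def Let_def mu R ..
  have d2: "(\<Sum>j\<in>{1..m}. (e * (real m + 1 - 2 * real j))\<^sup>2 / 4) = T / 4"
    unfolding T_def by (rule sum_divide_distrib[symmetric])
  have d3: "(\<Sum>j\<in>{1..m}. (y j - y (m+1-j))\<^sup>2) = T" unfolding L T_def ..
  show ?thesis unfolding d1 d2 d3 by (simp only: divide_divide_eq_left mult.commute)
qed

theorem theorem3:
  fixes y :: "nat \<Rightarrow> real" and m :: nat
  assumes "m \<ge> 1"
    and "\<forall>i j. 1 \<le> i \<and> i < j \<and> j \<le> m \<longrightarrow> y j < y i"
  shows "is_scheme 1 m m (reversal m)
         \<and> (\<forall>r \<sigma>. is_scheme 1 m r \<sigma> \<longrightarrow> D_ach 1 y m \<sigma> \<le> D_ach 1 y m (reversal m))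
         \<and> ((\<exists>y0 d. y ` {1..m} = {y0 + real i * d | i. i < m})
              \<longrightarrow> D_ach 1 y m (reversal m) = D_max y m)"
proof (intro conjI allI impI)
  show "is_scheme 1 m m (reversal m)"
    unfolding is_scheme_def
  proof
    fix i :: nat assume "i \<in> {1..2^1}"
    show "inj_on (reversal m i) {1..m} \<and> reversal m i ` {1..m} \<subseteq> {1..m}"
    proof (cases "i = 1")
      case True then show ?thesis unfolding reversal_def by (simp add: inj_on_def)
    next
      case False
      have "inj_on (reversal m i) {1..m}"
        by (rule inj_onI) (use False in \<open>auto simp add: reversal_def\<close>)
      moreover have "reversal m i ` {1..m} \<subseteq> {1..m}"
        using False by (auto simp: reversal_def)
      ultimately show ?thesis by blast
    qed
  qed
next
  fix r \<sigma> assume sch: "is_scheme 1 m r \<sigma>"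
  have mono: "\<forall>i j. 1 \<le> i \<and> i \<le> j \<and> j \<le> m \<longrightarrow> y j \<le> y i"
  proof (intro allI impI)
    fix i j assume h: "1 \<le> i \<and> i \<le> j \<and> j \<le> m"
    then have "i = j \<or> i < j" by auto
    then show "y j \<le> y i" using assms(2) h by (metis order.refl less_imp_le)
  qed
  show "D_ach 1 y m \<sigma> \<le> D_ach 1 y m (reversal m)"
    using D_gen[OF mono sch] D_rev[OF assms(1), of y] by simp
next
  assume "\<exists>y0 d. y ` {1..m} = {y0 + real i * d | i. i < m}"
  then obtain y0 d where ap: "y ` {1..m} = {y0 + real i * d | i. i < m}" by blast
  obtain c e where ce: "\<forall>j\<in>{1..m}. y j = c - real j * e" using AP[OF assms(1) assms(2) ap] by blast
  show "D_ach 1 y m (reversal m) = D_max y m"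
    using D_rev[OF assms(1), of y] AP_val[OF assms(1) ce] by (rule trans)
qed

end
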